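(* Let $A,B,C,D$ be real random variables on a common probability space with finite second moments, $\mathrm{Var}(B)>0$, $\mathrm{Var}(D)>0$, $|\mathrm{Corr}(B,D)|<1$, $\mathbb{E}[A]\neq0$, $\mathbb{E}[C]\neq 0$, and set $R=\mathbb{E}[A]/\mathbb{E}[C]$. Let $n\ge1$ and let $(A_i,B_i,C_i,D_i)_{i=1,\dots,n}$ be i.i.d. copies of $(A,B,C,D)$. For $\alpha,\beta\in\mathbb{R}$ put $N_\alpha=\overline{A_n}+\alpha(\mathbb{E}[B]-\overline{B_n})$ and $M_\beta=\overline{C_n}+\beta(\mathbb{E}[D]-\overline{D_n})$. Let $$\alpha_o=\frac{\mathrm{Var}(D)\mathrm{Cov}(A,B)-R\,\mathrm{Var}(D)\mathrm{Cov}(B,C)+R\,\mathrm{Cov}(B,D)\mathrm{Cov}(C,D)-\mathrm{Cov}(B,D)\mathrm{Cov}(A,D)}{\mathrm{Var}(B)\mathrm{Var}(D)-\mathrm{Cov}(B,D)^2},$$ $$\beta_o=\frac{\mathrm{Cov}(B,D)\mathrm{Cov}(A,B)-R\,\mathrm{Cov}(B,D)\mathrm{Cov}(B,C)+R\,\mathrm{Var}(B)\mathrm{Cov}(C,D)-\mathrm{Var}(B)\mathrm{Cov}(A,D)}{R\big(\mathrm{Var}(B)\mathrm{Var}(D)-\mathrm{Cov}(B,D)^2\big)}.$$ Then $$\Phi(N_{\alpha_o},M_{\beta_o})-\Phi(\overline{A_n},\overline{C_n})=-\frac{1}{n\,\mathbb{E}[C]^2}\,\frac{\mathrm{Var}\Big(\big(R\,\mathrm{Cov}(B,C)-\mathrm{Cov}(A,B)\big)D-\big(R\,\mathrm{Cov}(C,D)-\mathrm{Cov}(A,D)\big)B\Big)}{\mathrm{Var}(B)\mathrm{Var}(D)-\mathrm{Cov}(B,D)^2}\le0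 .$$
   Context: For a random variable $X$, $\overline{X_n}=\frac1n\sum_{i=1}^n X_i$ denotes the sample mean of the i.i.d. copies $X_1,\dots,X_n$. For real random variables $X,Z$ with finite second moments and $\mathbb{E}[Z]\neq0$, define the first-order (delta-method) approximation of the variance of the ratio $X/Z$: $$\Phi(X,Z)=\frac{\mathrm{Var}(X)}{\mathbb{E}[Z]^2}+\frac{\mathbb{E}[X]^2}{\mathbb{E}[Z]^4}\mathrm{Var}(Z)-2\frac{\mathbb{E}[X]}{\mathbb{E}[Z]^3}\mathrm{Cov}(X,Z).$$ $\Phi(N_\alpha,M_\beta)$ is the paper's variance of the CV/CV ratio estimator $N_\alpha/M_\beta$ of $R$, and $\Phi(\overline{A_n},\overline{C_n})$ that of the Monte Carlo ratio estimator $\overline{A_n}/\overline{C_n}$; $\mathbb{E}[B],\mathbb{E}[D]$ are known constants. $\mathrm{Corr}(B,D)=\mathrm{Cov}(B,D)/\sqrt{\mathrm{Var}(B)\mathrm{Var}(D)}$. *)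

theory Defs
  imports "HOL-Probability.Probability"
begin

definition (in prob_space) cov :: "('a \<Rightarrow> real) \<Rightarrow> ('a \<Rightarrow> real) \<Rightarrow> real" where
  "cov X Z = expectation (\<lambda>x. (X x - expectation X) * (Z x - expectation Z))"

definition (in prob_space) corr :: "('a \<Rightarrow> real) \<Rightarrow> ('a \<Rightarrow> real) \<Rightarrow> real" where
  "corr X Z = cov X Z / sqrt (variance X * variance Z)"

text \<open>First-order (delta-method) variance approximation of the ratio X/Z.\<close>
definition (in prob_space) Phi :: "('a \<Rightarrow> real) \<Rightarrow> ('a \<Rightarrow> real) \<Rightarrow> real" where
  "Phi X Z = variance X / (expectation Z)^2
     + (expectation X)^2 / (expectation Z)^4 * variance Z
     - 2 * expectation X / (expectation Z)^3 * cov X Z"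

definition sample_mean :: "nat \<Rightarrow> (nat \<Rightarrow> 'a \<Rightarrow> real) \<Rightarrow> 'a \<Rightarrow> real" where
  "sample_mean n X = (\<lambda>\<omega>. (\<Sum>i=1..n. X i \<omega>) / real n)"

end

theory Submission imports Defs begin

lemma abs_prod_le: "\<bar>(x::real) * y\<bar> \<le> x^2 + y^2"
proof -
  have "0 \<le> (\<bar>x\<bar> - \<bar>y\<bar>)^2" by simp
  hence "2 * (\<bar>x\<bar> * \<bar>y\<bar>) \<le> x^2 + y^2" by (simp add: power2_eq_square algebra_simps)
  moreover have "0 \<le> \<bar>x\<bar> * \<bar>y\<bar>" by simp
  ultimately show ?thesis unfolding abs_mult by linarith
qed

context prob_space
begin

lemma int_prod:
  fixes X Y :: "'a \<Rightarrow> real"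
  assumes [measurable]: "X \<in> borel_measurable M" "Y \<in> borel_measurable M"
    and "integrable M (\<lambda>x. (X x)^2)" "integrable M (\<lambda>x. (Y x)^2)"
  shows "integrable M (\<lambda>x. X x * Y x)"
proof (rule Bochner_Integration.integrable_bound[where f="\<lambda>x. (X x)^2 + (Y x)^2"])
  show "integrable M (\<lambda>x. (X x)^2 + (Y x)^2)" using assms by simp
  show "(\<lambda>x. X x * Y x) \<in> borel_measurable M" by simp
  show "AE x in M. norm (X x * Y x) \<le> norm ((X x)^2 + (Y x)^2)"
    using abs_prod_le by simp
qed

lemma int_L1:
  fixes X :: "'a \<Rightarrow> real"
  assumes [measurable]: "X \<in> borel_measurable M" and "integrable M (\<lambda>x. (X x)^2)"
  shows "integrable M X"
  using square_integrable_imp_integrable assms by blast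


lemma L2_add:
  fixes X Y :: "'a \<Rightarrow> real"
  assumes [measurable]: "X \<in> borel_measurable M" "Y \<in> borel_measurable M"
    and "integrable M (\<lambda>x. (X x)^2)" "integrable M (\<lambda>x. (Y x)^2)"
  shows "integrable M (\<lambda>x. (X x + Y x)^2)"
proof -
  have "integrable M (\<lambda>x. (X x)^2 + 2 * (X x * Y x) + (Y x)^2)"
    using int_prod[OF assms] assms by simp
  moreover have "(\<lambda>x. (X x + Y x)^2) = (\<lambda>x. (X x)^2 + 2 * (X x * Y x) + (Y x)^2)"
    by (simp add: fun_eq_iff power2_eq_square algebra_simps)
  ultimately show ?thesis by simp
qed

lemma L2_scale:
  fixes X :: "'a \<Rightarrow> real"
  assumes "integrable M (\<lambda>x. (X x)^2)"
  shows "integrable M (\<lambda>x. (c * X x)^2)"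
  using integrable_mult_right[OF assms, of "c^2"] by (simp add: power_mult_distrib)

lemma cov_eq:
  fixes X Y :: "'a \<Rightarrow> real"
  assumes [measurable]: "X \<in> borel_measurable M" "Y \<in> borel_measurable M"
    and "integrable M (\<lambda>x. (X x)^2)" "integrable M (\<lambda>x. (Y x)^2)"
  shows "cov X Y = expectation (\<lambda>x. X x * Y x) - expectation X * expectation Y"
proof -
  have iX: "integrable M X" and iY: "integrable M Y" using int_L1 assms by blast+
  have iXY: "integrable M (\<lambda>x. X x * Y x)" using int_prod assms by blast
  have "(\<lambda>x. (X x - expectation X) * (Y x - expectation Y)) =
        (\<lambda>x. X x * Y x - expectation Y * X x - expectation X * Y x + expectation X * expectation Y)"
    by (auto simp: algebra_simps)
  hence "cov X Y = expectation (\<lambda>x. X x * Y x - expectation Y * X x - expectation X * Y x + expectation X * expectation Y)"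
    by (simp add: cov_def)
  also have "\<dots> = expectation (\<lambda>x. X x * Y x - expectation Y * X x - expectation X * Y x) + expectation X * expectation Y"
    using iX iY iXY prob_space by (subst Bochner_Integration.integral_add) auto
  also have "expectation (\<lambda>x. X x * Y x - expectation Y * X x - expectation X * Y x)
     = expectation (\<lambda>x. X x * Y x - expectation Y * X x) - expectation (\<lambda>x. expectation X * Y x)"
    using iX iY iXY by (subst Bochner_Integration.integral_diff) auto
  also have "expectation (\<lambda>x. X x * Y x - expectation Y * X x)
     = expectation (\<lambda>x. X x * Y x) - expectation (\<lambda>x. expectation Y * X x)"
    using iX iY iXY by (subst Bochner_Integration.integral_diff) auto
  finally show ?thesis by simp
qed

lemma cov_sym: "cov X Y = cov Y X"
  unfolding cov_def by (simp add: mult.commute)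

lemma var_cov: "variance X = cov X X"
  unfolding cov_def by (simp add: power2_eq_square)

lemma cov_scale: "cov (\<lambda>x. c * X x) Y = c * cov X Y"
proof -
  have "(\<lambda>x. (c * X x - expectation (\<lambda>x. c * X x)) * (Y x - expectation Y)) =
        (\<lambda>x. c * ((X x - expectation X) * (Y x - expectation Y)))"
    by (auto simp: algebra_simps)
  thus ?thesis unfolding cov_def by simp
qed

lemma cov_shift:
  fixes X :: "'a \<Rightarrow> real"
  assumes "integrable M X"
  shows "cov (\<lambda>x. k + X x) Y = cov X Y"
proof -
  have "expectation (\<lambda>x. k + X x) = k + expectation X"
    using assms prob_space by (subst Bochner_Integration.integral_add) auto
  thus ?thesis unfolding cov_def by simp
qed

lemma cov_add:
  fixes X Y Z :: "'a \<Rightarrow> real"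
  assumes [measurable]: "X \<in> borel_measurable M" "Y \<in> borel_measurable M" "Z \<in> borel_measurable M"
    and "integrable M (\<lambda>x. (X x)^2)" "integrable M (\<lambda>x. (Y x)^2)" "integrable M (\<lambda>x. (Z x)^2)"
  shows "cov (\<lambda>x. X x + Y x) Z = cov X Z + cov Y Z"
proof -
  have "integrable M (\<lambda>x. (X x + Y x)^2)" using L2_add assms by blast
  hence "cov (\<lambda>x. X x + Y x) Z = expectation (\<lambda>x. (X x + Y x) * Z x) - expectation (\<lambda>x. X x + Y x) * expectation Z"
    using cov_eq assms by simp
  also have "expectation (\<lambda>x. (X x + Y x) * Z x) = expectation (\<lambda>x. X x * Z x) + expectation (\<lambda>x. Y x * Z x)"
    using int_prod[of X Z] int_prod[of Y Z] assms
    by (simp add: distrib_right)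
  also have "expectation (\<lambda>x. X x + Y x) = expectation X + expectation Y"
    using int_L1[of X] int_L1[of Y] assms by simp
  finally show ?thesis using cov_eq[OF assms(1,3,4,6)] cov_eq[OF assms(2,3,5,6)] by (simp add: algebra_simps)
qed


lemma cov_lin_left:
  fixes X Y G :: "'a \<Rightarrow> real"
  assumes [measurable]: "X \<in> borel_measurable M" "Y \<in> borel_measurable M" "G \<in> borel_measurable M"
    and "integrable M (\<lambda>x. (X x)^2)" "integrable M (\<lambda>x. (Y x)^2)" "integrable M (\<lambda>x. (G x)^2)"
  shows "cov (\<lambda>x. k + a * X x + b * Y x) G = a * cov X G + b * cov Y G"
proof -
  have sX: "integrable M (\<lambda>x. (a * X x)^2)" and sY: "integrable M (\<lambda>x. (b * Y x)^2)"
    using L2_scale assms by blast+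
  have "integrable M (\<lambda>x. (a * X x + b * Y x)^2)" using L2_add[OF _ _ sX sY] by simp
  hence i: "integrable M (\<lambda>x. a * X x + b * Y x)" using int_L1[of "\<lambda>x. a * X x + b * Y x"] by simp
  have "cov (\<lambda>x. k + a * X x + b * Y x) G = cov (\<lambda>x. k + (a * X x + b * Y x)) G"
    by (simp add: add.assoc)
  also have "\<dots> = cov (\<lambda>x. a * X x + b * Y x) G" using cov_shift[OF i] .
  also have "\<dots> = cov (\<lambda>x. a * X x) G + cov (\<lambda>x. b * Y x) G"
    using cov_add[of "\<lambda>x. a * X x" "\<lambda>x. b * Y x" G] sX sY assms by simp
  finally show ?thesis by (simp add: cov_scale)
qed

lemma cov_aff2:
  fixes X Y Z W :: "'a \<Rightarrow> real"
  assumes [measurable]: "X \<in> borel_measurable M" "Y \<in> borel_measurable M" "Z \<in> borel_measurable M" "W \<in> borel_measurable M"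
    and "integrable M (\<lambda>x. (X x)^2)" "integrable M (\<lambda>x. (Y x)^2)" "integrable M (\<lambda>x. (Z x)^2)" "integrable M (\<lambda>x. (W x)^2)"
  shows "cov (\<lambda>x. k + a * X x + b * Y x) (\<lambda>x. k' + c * Z x + d * W x)
       = a * c * cov X Z + a * d * cov X W + b * c * cov Y Z + b * d * cov Y W"
proof -
  have sZ: "integrable M (\<lambda>x. (c * Z x)^2)" and sW: "integrable M (\<lambda>x. (d * W x)^2)"
    using L2_scale assms by blast+
  have "integrable M (\<lambda>x. (c * Z x + d * W x)^2)" using L2_add[OF _ _ sZ sW] by simp
  moreover have "integrable M (\<lambda>x. (k' + (c * Z x + d * W x))^2)"
    by (rule L2_add) (use calculation in auto)
  ultimately have "integrable M (\<lambda>x. (k' + c * Z x + d * W x)^2)" by (simp add: add.assoc)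
  hence "cov (\<lambda>x. k + a * X x + b * Y x) (\<lambda>x. k' + c * Z x + d * W x)
     = a * cov X (\<lambda>x. k' + c * Z x + d * W x) + b * cov Y (\<lambda>x. k' + c * Z x + d * W x)"
    using cov_lin_left assms by simp
  also have "cov X (\<lambda>x. k' + c * Z x + d * W x) = c * cov X Z + d * cov X W"
    using cov_lin_left[of Z W X k' c d] assms cov_sym by (metis)
  also have "cov Y (\<lambda>x. k' + c * Z x + d * W x) = c * cov Y Z + d * cov Y W"
    using cov_lin_left[of Z W Y k' c d] assms cov_sym by (metis)
  finally show ?thesis by (simp add: algebra_simps)
qed

lemma exp_aff2:
  fixes X Y :: "'a \<Rightarrow> real"
  assumes "integrable M X" "integrable M Y"
  shows "expectation (\<lambda>x. k + a * X x + b * Y x) = k + a * expectation X + b * expectation Y"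
  using assms prob_space by simp

lemma L2_sum:
  fixes X :: "nat \<Rightarrow> 'a \<Rightarrow> real"
  assumes "finite I" "\<And>i. i \<in> I \<Longrightarrow> X i \<in> borel_measurable M" "\<And>i. i \<in> I \<Longrightarrow> integrable M (\<lambda>x. (X i x)^2)"
  shows "integrable M (\<lambda>x. (\<Sum>i\<in>I. X i x)^2)"
  using assms
proof (induction I rule: finite_induct)
  case empty then show ?case by simp
next
  case (insert j I)
  have m: "(\<lambda>x. \<Sum>i\<in>I. X i x) \<in> borel_measurable M" using insert by auto
  have "integrable M (\<lambda>x. (X j x + (\<Sum>i\<in>I. X i x))^2)"
    by (rule L2_add) (use insert m in auto)
  then show ?case using insert by simp
qed

lemma cov_sum_left:
  fixes X :: "nat \<Rightarrow> 'a \<Rightarrow> real" and G :: "'a \<Rightarrow> real"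
  assumes "finite I" "\<And>i. i \<in> I \<Longrightarrow> X i \<in> borel_measurable M" "\<And>i. i \<in> I \<Longrightarrow> integrable M (\<lambda>x. (X i x)^2)"
    and [measurable]: "G \<in> borel_measurable M" and "integrable M (\<lambda>x. (G x)^2)"
  shows "cov (\<lambda>x. \<Sum>i\<in>I. X i x) G = (\<Sum>i\<in>I. cov (X i) G)"
  using assms(1-3)
proof (induction I rule: finite_induct)
  case empty then show ?case by (simp add: cov_def)
next
  case (insert j I)
  have m: "(\<lambda>x. \<Sum>i\<in>I. X i x) \<in> borel_measurable M" using insert by auto
  have s: "integrable M (\<lambda>x. (\<Sum>i\<in>I. X i x)^2)" using L2_sum insert by auto
  have "cov (\<lambda>x. \<Sum>i\<in>insert j I. X i x) G = cov (\<lambda>x. X j x + (\<Sum>i\<in>I. X i x)) G"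
    using insert by simp
  also have "\<dots> = cov (X j) G + cov (\<lambda>x. \<Sum>i\<in>I. X i x) G"
    using cov_add[of "X j" "\<lambda>x. \<Sum>i\<in>I. X i x" G] insert m s assms(4,5) by simp
  finally show ?case using insert by simp
qed

end

locale iid = prob_space +
  fixes T :: "nat \<Rightarrow> 'a \<Rightarrow> real \<times> real \<times> real \<times> real"
    and T0 :: "'a \<Rightarrow> real \<times> real \<times> real \<times> real" and n :: nat
  assumes rvT: "\<And>i. i \<in> {1..n} \<Longrightarrow> T i \<in> borel_measurable M"
    and rvT0: "T0 \<in> borel_measurable M"
    and indepT: "indep_vars (\<lambda>_. borel) T {1..n}"
    and identT: "\<And>i. i \<in> {1..n} \<Longrightarrow> distr M borel (T i) = distr M borel T0"
begin

lemma transfer_int: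
  fixes h :: "real \<times> real \<times> real \<times> real \<Rightarrow> real"
  assumes i: "i \<in> {1..n}" and h: "h \<in> borel_measurable borel"
  shows "expectation (\<lambda>x. h (T i x)) = expectation (\<lambda>x. h (T0 x))"
proof -
  have "expectation (\<lambda>x. h (T i x)) = integral\<^sup>L (distr M borel (T i)) h"
    using integral_distr[OF rvT[OF i] h] by simp
  also have "\<dots> = integral\<^sup>L (distr M borel T0) h" using identT[OF i] by simp
  also have "\<dots> = expectation (\<lambda>x. h (T0 x))" using integral_distr[OF rvT0 h] by simp
  finally show ?thesis .
qed

lemma transfer_integrable:
  fixes h :: "real \<times> real \<times> real \<times> real \<Rightarrow> real"
  assumes i: "i \<in> {1..n}" and h: "h \<in> borel_measurable borel"
  shows "integrable M (\<lambda>x. h (T i x)) \<longleftrightarrow> integrable M (\<lambda>x. h (T0 x))"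
proof -
  have "integrable M (\<lambda>x. h (T i x)) \<longleftrightarrow> integrable (distr M borel (T i)) h"
    using integrable_distr_eq[OF rvT[OF i] h] by simp
  also have "\<dots> \<longleftrightarrow> integrable (distr M borel T0) h" using identT[OF i] by simp
  also have "\<dots> \<longleftrightarrow> integrable M (\<lambda>x. h (T0 x))" using integrable_distr_eq[OF rvT0 h] by simp
  finally show ?thesis .
qed


context
  fixes F G :: "real \<times> real \<times> real \<times> real \<Rightarrow> real"
  assumes Fm[measurable]: "F \<in> borel_measurable borel" and Gm[measurable]: "G \<in> borel_measurable borel"
    and F2: "integrable M (\<lambda>x. (F (T0 x))^2)" and G2: "integrable M (\<lambda>x. (G (T0 x))^2)"
begin

lemma Fi_meas: "i \<in> {1..n} \<Longrightarrow> (\<lambda>x. F (T i x)) \<in> borel_measurable M"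
  using rvT by (simp add: measurable_compose[OF _ Fm])

lemma Gi_meas: "i \<in> {1..n} \<Longrightarrow> (\<lambda>x. G (T i x)) \<in> borel_measurable M"
  using rvT by (simp add: measurable_compose[OF _ Gm])

lemma F0_meas: "(\<lambda>x. F (T0 x)) \<in> borel_measurable M"
  using rvT0 by (simp add: measurable_compose[OF _ Fm])

lemma G0_meas: "(\<lambda>x. G (T0 x)) \<in> borel_measurable M"
  using rvT0 by (simp add: measurable_compose[OF _ Gm])

lemma Fi_L2: "i \<in> {1..n} \<Longrightarrow> integrable M (\<lambda>x. (F (T i x))^2)"
  using transfer_integrable[of i "\<lambda>t. (F t)^2"] F2 by simp

lemma Gi_L2: "i \<in> {1..n} \<Longrightarrow> integrable M (\<lambda>x. (G (T i x))^2)"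
  using transfer_integrable[of i "\<lambda>t. (G t)^2"] G2 by simp

lemma exp_Fi: "i \<in> {1..n} \<Longrightarrow> expectation (\<lambda>x. F (T i x)) = expectation (\<lambda>x. F (T0 x))"
  using transfer_int[of i F] by simp

lemma exp_Gi: "i \<in> {1..n} \<Longrightarrow> expectation (\<lambda>x. G (T i x)) = expectation (\<lambda>x. G (T0 x))"
  using transfer_int[of i G] by simp

lemma cov_diag: "i \<in> {1..n} \<Longrightarrow> cov (\<lambda>x. F (T i x)) (\<lambda>x. G (T i x)) = cov (\<lambda>x. F (T0 x)) (\<lambda>x. G (T0 x))"
  unfolding cov_def using exp_Fi exp_Gi
    transfer_int[of i "\<lambda>t. (F t - expectation (\<lambda>x. F (T0 x))) * (G t - expectation (\<lambda>x. G (T0 x)))"]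
  by simp

lemma cov_off:
  assumes i: "i \<in> {1..n}" and j: "j \<in> {1..n}" and ij: "i \<noteq> j"
  shows "cov (\<lambda>x. F (T i x)) (\<lambda>x. G (T j x)) = 0"
proof -
  have ind: "indep_var (Pi\<^sub>M {i} (\<lambda>_. borel)) (\<lambda>\<omega>. restrict (\<lambda>k. T k \<omega>) {i})
                       (Pi\<^sub>M {j} (\<lambda>_. borel)) (\<lambda>\<omega>. restrict (\<lambda>k. T k \<omega>) {j})"
    using indep_var_restrict[OF indepT, of "{i}" "{j}"] i j ij by auto
  have m1: "(\<lambda>f. F (f i)) \<in> measurable (Pi\<^sub>M {i} (\<lambda>_. borel)) borel" by measurable
  have m2: "(\<lambda>f. G (f j)) \<in> measurable (Pi\<^sub>M {j} (\<lambda>_. borel)) borel" by measurable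
  have "indep_var borel ((\<lambda>f. F (f i)) \<circ> (\<lambda>\<omega>. restrict (\<lambda>k. T k \<omega>) {i}))
                  borel ((\<lambda>f. G (f j)) \<circ> (\<lambda>\<omega>. restrict (\<lambda>k. T k \<omega>) {j}))"
    by (rule indep_var_compose[OF ind m1 m2])
  hence ind2: "indep_var borel (\<lambda>x. F (T i x)) borel (\<lambda>x. G (T j x))"
    by (simp add: comp_def)
  have "expectation (\<lambda>x. F (T i x) * G (T j x)) = expectation (\<lambda>x. F (T i x)) * expectation (\<lambda>x. G (T j x))"
    by (rule indep_var_lebesgue_integral[OF ind2])
       (rule int_L1[OF Fi_meas[OF i] Fi_L2[OF i]], rule int_L1[OF Gi_meas[OF j] Gi_L2[OF j]])
  thus ?thesis using cov_eq[OF Fi_meas[OF i] Gi_meas[OF j] Fi_L2[OF i] Gi_L2[OF j]] by simp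
qed

lemma sm_meas: "sample_mean n (\<lambda>i x. F (T i x)) \<in> borel_measurable M"
  unfolding sample_mean_def using Fi_meas by (intro borel_measurable_divide borel_measurable_sum) auto

lemma sm_L2: "integrable M (\<lambda>x. (sample_mean n (\<lambda>i x. F (T i x)) x)^2)"
proof -
  have "integrable M (\<lambda>x. (\<Sum>i\<in>{1..n}. F (T i x))^2)"
    using L2_sum[of "{1..n}" "\<lambda>i x. F (T i x)"] Fi_meas Fi_L2 by auto
  hence "integrable M (\<lambda>x. (1 / real n * (\<Sum>i\<in>{1..n}. F (T i x)))^2)" by (rule L2_scale)
  thus ?thesis unfolding sample_mean_def by simp
qed

lemma sm_exp:
  assumes n: "n \<ge> 1"
  shows "expectation (sample_mean n (\<lambda>i x. F (T i x))) = expectation (\<lambda>x. F (T0 x))"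
proof -
  have "expectation (sample_mean n (\<lambda>i x. F (T i x))) = expectation (\<lambda>x. \<Sum>i\<in>{1..n}. F (T i x)) / real n"
    unfolding sample_mean_def by simp
  also have "expectation (\<lambda>x. \<Sum>i\<in>{1..n}. F (T i x)) = (\<Sum>i\<in>{1..n}. expectation (\<lambda>x. F (T i x)))"
    by (rule Bochner_Integration.integral_sum) (rule int_L1[OF Fi_meas Fi_L2], auto)
  also have "\<dots> = real n * expectation (\<lambda>x. F (T0 x))" using exp_Fi by simp
  finally show ?thesis using n by simp
qed

end

lemma sm_cov:
  fixes F G :: "real \<times> real \<times> real \<times> real \<Rightarrow> real"
  assumes Fm[measurable]: "F \<in> borel_measurable borel" and Gm[measurable]: "G \<in> borel_measurable borel"
    and F2: "integrable M (\<lambda>x. (F (T0 x))^2)" and G2: "integrable M (\<lambda>x. (G (T0 x))^2)"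
    and n: "n \<ge> 1"
  shows "cov (sample_mean n (\<lambda>i x. F (T i x))) (sample_mean n (\<lambda>i x. G (T i x)))
       = cov (\<lambda>x. F (T0 x)) (\<lambda>x. G (T0 x)) / real n"
proof -
  note FG = Fm Gm F2 G2
  have e1: "sample_mean n (\<lambda>i x. F (T i x)) = (\<lambda>x. (1 / real n) * (\<Sum>i\<in>{1..n}. F (T i x)))"
    unfolding sample_mean_def by auto
  have e2: "sample_mean n (\<lambda>i x. G (T i x)) = (\<lambda>x. (1 / real n) * (\<Sum>i\<in>{1..n}. G (T i x)))"
    unfolding sample_mean_def by auto
  have sG: "integrable M (\<lambda>x. (\<Sum>i\<in>{1..n}. G (T i x))^2)"
    using L2_sum[of "{1..n}" "\<lambda>i x. G (T i x)"] Gi_meas[OF FG] Gi_L2[OF FG] by auto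
  have mG: "(\<lambda>x. \<Sum>i\<in>{1..n}. G (T i x)) \<in> borel_measurable M"
    using Gi_meas[OF FG] by auto
  have "cov (\<lambda>x. \<Sum>i\<in>{1..n}. F (T i x)) (\<lambda>x. \<Sum>i\<in>{1..n}. G (T i x))
      = (\<Sum>i\<in>{1..n}. cov (\<lambda>x. F (T i x)) (\<lambda>x. \<Sum>j\<in>{1..n}. G (T j x)))"
    by (rule cov_sum_left) (use Fi_meas[OF FG] Fi_L2[OF FG] mG sG in auto)
  also have "\<dots> = (\<Sum>i\<in>{1..n}. \<Sum>j\<in>{1..n}. cov (\<lambda>x. F (T i x)) (\<lambda>x. G (T j x)))"
  proof (rule sum.cong[OF refl])
    fix i assume i: "i \<in> {1..n}"
    have "cov (\<lambda>x. F (T i x)) (\<lambda>x. \<Sum>j\<in>{1..n}. G (T j x)) = cov (\<lambda>x. \<Sum>j\<in>{1..n}. G (T j x)) (\<lambda>x. F (T i x))"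
      by (rule cov_sym)
    also have "\<dots> = (\<Sum>j\<in>{1..n}. cov (\<lambda>x. G (T j x)) (\<lambda>x. F (T i x)))"
      by (rule cov_sum_left) (use Gi_meas[OF FG] Gi_L2[OF FG] Fi_meas[OF FG i] Fi_L2[OF FG i] in auto)
    finally show "cov (\<lambda>x. F (T i x)) (\<lambda>x. \<Sum>j\<in>{1..n}. G (T j x)) = (\<Sum>j\<in>{1..n}. cov (\<lambda>x. F (T i x)) (\<lambda>x. G (T j x)))"
      using cov_sym by simp
  qed
  also have "\<dots> = (\<Sum>i\<in>{1..n}. cov (\<lambda>x. F (T0 x)) (\<lambda>x. G (T0 x)))"
  proof (rule sum.cong[OF refl])
    fix i assume i: "i \<in> {1..n}"
    have "(\<Sum>j\<in>{1..n}. cov (\<lambda>x. F (T i x)) (\<lambda>x. G (T j x)))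
        = (\<Sum>j\<in>{1..n}. if i = j then cov (\<lambda>x. F (T0 x)) (\<lambda>x. G (T0 x)) else 0)"
      by (rule sum.cong[OF refl]) (use cov_diag[OF FG] cov_off[OF FG] i in auto)
    also have "\<dots> = cov (\<lambda>x. F (T0 x)) (\<lambda>x. G (T0 x))" using i by simp
    finally show "(\<Sum>j\<in>{1..n}. cov (\<lambda>x. F (T i x)) (\<lambda>x. G (T j x))) = cov (\<lambda>x. F (T0 x)) (\<lambda>x. G (T0 x))" .
  qed
  also have "\<dots> = real n * cov (\<lambda>x. F (T0 x)) (\<lambda>x. G (T0 x))" by simp
  finally have S: "cov (\<lambda>x. \<Sum>i\<in>{1..n}. F (T i x)) (\<lambda>x. \<Sum>i\<in>{1..n}. G (T i x)) = real n * cov (\<lambda>x. F (T0 x)) (\<lambda>x. G (T0 x))" .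
  have "cov (sample_mean n (\<lambda>i x. F (T i x))) (sample_mean n (\<lambda>i x. G (T i x)))
      = (1 / real n) * ((1 / real n) * cov (\<lambda>x. \<Sum>i\<in>{1..n}. F (T i x)) (\<lambda>x. \<Sum>i\<in>{1..n}. G (T i x)))"
    unfolding e1 e2 cov_scale
    by (subst cov_sym, subst cov_scale, subst cov_sym, rule refl)
  also have "\<dots> = cov (\<lambda>x. F (T0 x)) (\<lambda>x. G (T0 x)) / real n" unfolding S using n by simp
  finally show ?thesis .
qed

end

lemma alg:
  fixes AA AB AC AD BB BC BD CC CD DD EA EC n R a b Dl p q :: real
  assumes EA: "EA \<noteq> 0" and EC: "EC \<noteq> 0" and Dl: "Dl \<noteq> 0" and n: "n \<noteq> 0"
    and R: "R = EA / EC" and Dldef: "Dl = BB * DD - BD^2"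
    and a: "a = (DD * AB - R * DD * BC + R * BD * CD - BD * AD) / Dl"
    and b: "b = (BD * AB - R * BD * BC + R * BB * CD - BB * AD) / (R * Dl)"
    and p: "p = R * BC - AB" and q: "q = R * CD - AD"
  shows "((AA - 2*a*AB + a^2*BB)/n / EC^2 + EA^2/EC^4 * ((CC - 2*b*CD + b^2*DD)/n)
            - 2*EA/EC^3 * ((AC - b*AD - a*BC + a*b*BD)/n))
        - (AA/n/EC^2 + EA^2/EC^4*(CC/n) - 2*EA/EC^3*(AC/n))
       = - (1 / (n * EC^2)) * ((p^2*DD - 2*p*q*BD + q^2*BB) / Dl)"
proof -
  have R0: "R \<noteq> 0" using EA EC R by simp
  define w where "w = R * b"
  have ha: "a * Dl = DD * AB - R * DD * BC + R * BD * CD - BD * AD" using a Dl by simp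
  have hw: "w * Dl = BD * AB - R * BD * BC + R * BB * CD - BB * AD" using b Dl R0 by (simp add: w_def)
  have "Dl^2 * (a^2*BB - 2*a*w*BD + w^2*DD + 2*a*p - 2*w*q)
      = (a*Dl)^2*BB - 2*(a*Dl)*(w*Dl)*BD + (w*Dl)^2*DD + 2*Dl*(a*Dl)*p - 2*Dl*(w*Dl)*q"
    by algebra
  also have "\<dots> = - Dl * (p^2*DD - 2*p*q*BD + q^2*BB)"
    unfolding ha hw unfolding p q Dldef by algebra
  finally have calc: "Dl^2 * (a^2*BB - 2*a*w*BD + w^2*DD + 2*a*p - 2*w*q) = - Dl * (p^2*DD - 2*p*q*BD + q^2*BB)" .
  have "Dl * ((a^2*BB - 2*a*w*BD + w^2*DD + 2*a*p - 2*w*q) * Dl) = Dl * (- (p^2*DD - 2*p*q*BD + q^2*BB))"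
    using calc by algebra
  hence "(a^2*BB - 2*a*w*BD + w^2*DD + 2*a*p - 2*w*q) * Dl = - (p^2*DD - 2*p*q*BD + q^2*BB)"
    using Dl by simp
  hence key: "a^2*BB - 2*a*w*BD + w^2*DD + 2*a*p - 2*w*q = - (p^2*DD - 2*p*q*BD + q^2*BB) / Dl"
    using Dl by (simp add: eq_divide_eq)
  have EAe: "EA = R * EC" using R EC by simp
  have "((AA - 2*a*AB + a^2*BB)/n / EC^2 + EA^2/EC^4 * ((CC - 2*b*CD + b^2*DD)/n)
            - 2*EA/EC^3 * ((AC - b*AD - a*BC + a*b*BD)/n))
        - (AA/n/EC^2 + EA^2/EC^4*(CC/n) - 2*EA/EC^3*(AC/n))
      = (a^2*BB - 2*a*w*BD + w^2*DD + 2*a*p - 2*w*q) / (n * EC^2)"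
    unfolding EAe w_def p q using EC n by (simp add: field_simps) algebra
  also have "\<dots> = - (1 / (n * EC^2)) * ((p^2*DD - 2*p*q*BD + q^2*BB) / Dl)"
    unfolding key using Dl n EC by (simp add: field_simps)
  finally show ?thesis .
qed

theorem mainTheorem6:
  fixes M :: "'a measure"
    and A B C D :: "'a \<Rightarrow> real"
    and As Bs Cs Ds :: "nat \<Rightarrow> 'a \<Rightarrow> real"
    and n :: nat
  assumes P: "prob_space M"
    and rvA: "A \<in> borel_measurable M" and rvB: "B \<in> borel_measurable M"
    and rvC: "C \<in> borel_measurable M" and rvD: "D \<in> borel_measurable M"
    and sqA: "integrable M (\<lambda>x. (A x)^2)" and sqB: "integrable M (\<lambda>x. (B x)^2)"
    and sqC: "integrable M (\<lambda>x. (C x)^2)" and sqD: "integrable M (\<lambda>x. (D x)^2)"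
    and varB: "prob_space.variance M B > 0"
    and varD: "prob_space.variance M D > 0"
    and corrBD: "\<bar>prob_space.corr M B D\<bar> < 1"
    and EA: "prob_space.expectation M A \<noteq> 0"
    and EC: "prob_space.expectation M C \<noteq> 0"
    and n: "n \<ge> 1"
    and rvi: "\<And>i. i \<in> {1..n} \<Longrightarrow>
                (\<lambda>\<omega>. (As i \<omega>, Bs i \<omega>, Cs i \<omega>, Ds i \<omega>)) \<in> borel_measurable M"
    and indep: "prob_space.indep_vars M (\<lambda>_. borel)
                  (\<lambda>i \<omega>. (As i \<omega>, Bs i \<omega>, Cs i \<omega>, Ds i \<omega>)) {1..n}"
    and ident: "\<And>i. i \<in> {1..n} \<Longrightarrow>
                  distr M borel (\<lambda>\<omega>. (As i \<omega>, Bs i \<omega>, Cs i \<omega>, Ds i \<omega>))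
                  = distr M borel (\<lambda>\<omega>. (A \<omega>, B \<omega>, C \<omega>, D \<omega>))"
  defines "R \<equiv> prob_space.expectation M A / prob_space.expectation M C"
    and "N \<equiv> (\<lambda>\<alpha> \<omega>. sample_mean n As \<omega>
                + \<alpha> * (prob_space.expectation M B - sample_mean n Bs \<omega>))"
    and "Mb \<equiv> (\<lambda>\<beta> \<omega>. sample_mean n Cs \<omega>
                + \<beta> * (prob_space.expectation M D - sample_mean n Ds \<omega>))"
    and "\<Delta> \<equiv> prob_space.variance M B * prob_space.variance M D - (prob_space.cov M B D)^2"
    and "\<alpha>o \<equiv> (prob_space.variance M D * prob_space.cov M A B
               - (prob_space.expectation M A / prob_space.expectation M C) * prob_space.variance M D * prob_space.cov M B C
               + (prob_space.expectation M A / prob_space.expectation M C) * prob_space.cov M B D * prob_space.cov M C D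
               - prob_space.cov M B D * prob_space.cov M A D) / (prob_space.variance M B * prob_space.variance M D - (prob_space.cov M B D)^2)"
    and "\<beta>o \<equiv> (prob_space.cov M B D * prob_space.cov M A B
               - (prob_space.expectation M A / prob_space.expectation M C) * prob_space.cov M B D * prob_space.cov M B C
               + (prob_space.expectation M A / prob_space.expectation M C) * prob_space.variance M B * prob_space.cov M C D
               - prob_space.variance M B * prob_space.cov M A D) / ((prob_space.expectation M A / prob_space.expectation M C) * (prob_space.variance M B * prob_space.variance M D - (prob_space.cov M B D)^2))"
  shows "prob_space.Phi M (N \<alpha>o) (Mb \<beta>o) - prob_space.Phi M (sample_mean n As) (sample_mean n Cs)
           = - (1 / (real n * (prob_space.expectation M C)^2))
             * (prob_space.variance M (\<lambda>\<omega>.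
                   ((prob_space.expectation M A / prob_space.expectation M C) * prob_space.cov M B C - prob_space.cov M A B) * D \<omega>
                 - ((prob_space.expectation M A / prob_space.expectation M C) * prob_space.cov M C D - prob_space.cov M A D) * B \<omega>) / (prob_space.variance M B * prob_space.variance M D - (prob_space.cov M B D)^2))
         \<and> - (1 / (real n * (prob_space.expectation M C)^2))
             * (prob_space.variance M (\<lambda>\<omega>.
                   ((prob_space.expectation M A / prob_space.expectation M C) * prob_space.cov M B C - prob_space.cov M A B) * D \<omega>
                 - ((prob_space.expectation M A / prob_space.expectation M C) * prob_space.cov M C D - prob_space.cov M A D) * B \<omega>) / (prob_space.variance M B * prob_space.variance M D - (prob_space.cov M B D)^2)) \<le> 0"
proof -
  interpret prob_space M by (rule P)
  define T where "T = (\<lambda>i \<omega>. (As i \<omega>, Bs i \<omega>, Cs i \<omega>, Ds i \<omega>))"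
  define T0 where "T0 = (\<lambda>\<omega>. (A \<omega>, B \<omega>, C \<omega>, D \<omega>))"
  define pA where "pA = (\<lambda>t::real \<times> real \<times> real \<times> real. fst t)"
  define pB where "pB = (\<lambda>t::real \<times> real \<times> real \<times> real. fst (snd t))"
  define pC where "pC = (\<lambda>t::real \<times> real \<times> real \<times> real. fst (snd (snd t)))"
  define pD where "pD = (\<lambda>t::real \<times> real \<times> real \<times> real. snd (snd (snd t)))"
  have T0m: "T0 \<in> borel_measurable M" unfolding T0_def
    by (intro borel_measurable_Pair rvA rvB rvC rvD)
  have "iid M T T0 n"
    by (rule iid.intro[OF P], unfold iid_axioms_def)
       (use rvi indep ident T0m in \<open>auto simp: T_def T0_def\<close>)
  then interpret I: iid M T T0 n .
  have P4: "F \<in> borel_measurable borel \<and> integrable M (\<lambda>x. (F (T0 x))^2)" if "F \<in> {pA, pB, pC, pD}" for F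
    using that sqA sqB sqC sqD
    by (auto simp: pA_def pB_def pC_def pD_def T0_def intro!: borel_measurable_continuous_onI continuous_intros)
  have smc: "cov (sample_mean n (\<lambda>i x. F (T i x))) (sample_mean n (\<lambda>i x. G (T i x)))
       = cov (\<lambda>x. F (T0 x)) (\<lambda>x. G (T0 x)) / real n"
    if "F \<in> {pA, pB, pC, pD}" "G \<in> {pA, pB, pC, pD}" for F G
    using I.sm_cov P4[OF that(1)] P4[OF that(2)] n by blast
  have sme: "expectation (sample_mean n (\<lambda>i x. F (T i x))) = expectation (\<lambda>x. F (T0 x))"
    if "F \<in> {pA, pB, pC, pD}" for F
    using I.sm_exp P4[OF that] n by blast
  have smm: "sample_mean n (\<lambda>i x. F (T i x)) \<in> borel_measurable M"
    if "F \<in> {pA, pB, pC, pD}" for F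
    using I.sm_meas P4[OF that] by blast
  have sm2: "integrable M (\<lambda>x. (sample_mean n (\<lambda>i x. F (T i x)) x)^2)"
    if "F \<in> {pA, pB, pC, pD}" for F
    using I.sm_L2 P4[OF that] by blast
  note simps = pA_def pB_def pC_def pD_def T_def T0_def
  have eA: "expectation (sample_mean n As) = expectation A" using sme[of pA] by (simp add: simps)
  have eB: "expectation (sample_mean n Bs) = expectation B" using sme[of pB] by (simp add: simps)
  have eC: "expectation (sample_mean n Cs) = expectation C" using sme[of pC] by (simp add: simps)
  have eD: "expectation (sample_mean n Ds) = expectation D" using sme[of pD] by (simp add: simps)
  have mA: "sample_mean n As \<in> borel_measurable M" using smm[of pA] by (simp add: simps)
  have mB: "sample_mean n Bs \<in> borel_measurable M" using smm[of pB] by (simp add: simps)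
  have mC: "sample_mean n Cs \<in> borel_measurable M" using smm[of pC] by (simp add: simps)
  have mD: "sample_mean n Ds \<in> borel_measurable M" using smm[of pD] by (simp add: simps)
  have qA: "integrable M (\<lambda>x. (sample_mean n As x)^2)" using sm2[of pA] by (simp add: simps)
  have qB: "integrable M (\<lambda>x. (sample_mean n Bs x)^2)" using sm2[of pB] by (simp add: simps)
  have qC: "integrable M (\<lambda>x. (sample_mean n Cs x)^2)" using sm2[of pC] by (simp add: simps)
  have qD: "integrable M (\<lambda>x. (sample_mean n Ds x)^2)" using sm2[of pD] by (simp add: simps)
  have cAA: "cov (sample_mean n As) (sample_mean n As) = cov A A / real n" using smc[of pA pA] by (simp add: simps)
  have cAB: "cov (sample_mean n As) (sample_mean n Bs) = cov A B / real n" using smc[of pA pB] by (simp add: simps)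
  have cBA: "cov (sample_mean n Bs) (sample_mean n As) = cov B A / real n" using smc[of pB pA] by (simp add: simps)
  have cBB: "cov (sample_mean n Bs) (sample_mean n Bs) = cov B B / real n" using smc[of pB pB] by (simp add: simps)
  have cCC: "cov (sample_mean n Cs) (sample_mean n Cs) = cov C C / real n" using smc[of pC pC] by (simp add: simps)
  have cCD: "cov (sample_mean n Cs) (sample_mean n Ds) = cov C D / real n" using smc[of pC pD] by (simp add: simps)
  have cDC: "cov (sample_mean n Ds) (sample_mean n Cs) = cov D C / real n" using smc[of pD pC] by (simp add: simps)
  have cDD: "cov (sample_mean n Ds) (sample_mean n Ds) = cov D D / real n" using smc[of pD pD] by (simp add: simps)
  have cAC: "cov (sample_mean n As) (sample_mean n Cs) = cov A C / real n" using smc[of pA pC] by (simp add: simps)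
  have cAD: "cov (sample_mean n As) (sample_mean n Ds) = cov A D / real n" using smc[of pA pD] by (simp add: simps)
  have cBC: "cov (sample_mean n Bs) (sample_mean n Cs) = cov B C / real n" using smc[of pB pC] by (simp add: simps)
  have cBD: "cov (sample_mean n Bs) (sample_mean n Ds) = cov B D / real n" using smc[of pB pD] by (simp add: simps)
  have NE: "N \<alpha>o = (\<lambda>\<omega>. \<alpha>o * expectation B + 1 * sample_mean n As \<omega> + (- \<alpha>o) * sample_mean n Bs \<omega>)"
    by (simp add: N_def fun_eq_iff algebra_simps)
  have ME: "Mb \<beta>o = (\<lambda>\<omega>. \<beta>o * expectation D + 1 * sample_mean n Cs \<omega> + (- \<beta>o) * sample_mean n Ds \<omega>)"
    by (simp add: Mb_def fun_eq_iff algebra_simps)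
  have n0: "real n > 0" using n by simp
  have vvA: "cov A A = variance A" and vvB: "cov B B = variance B"
    and vvC: "cov C C = variance C" and vvD: "cov D D = variance D"
    by (simp_all only: var_cov)
  have vN: "variance (N \<alpha>o) = (variance A - 2 * \<alpha>o * cov A B + \<alpha>o^2 * variance B)/real n"
  proof -
    have "variance (N \<alpha>o) = cov (N \<alpha>o) (N \<alpha>o)" by (rule var_cov)
    also have "\<dots> = 1 * 1 * cov (sample_mean n As) (sample_mean n As) + 1 * (- \<alpha>o) * cov (sample_mean n As) (sample_mean n Bs)
       + (- \<alpha>o) * 1 * cov (sample_mean n Bs) (sample_mean n As) + (- \<alpha>o) * (- \<alpha>o) * cov (sample_mean n Bs) (sample_mean n Bs)"
      unfolding NE by (rule cov_aff2[OF mA mB mA mB qA qB qA qB])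
    also have "\<dots> = (cov A A - 2 * \<alpha>o * cov A B + \<alpha>o^2 * cov B B)/real n"
      unfolding cAA cAB cBA cBB cov_sym[of B A] using n0 by (simp add: field_simps power2_eq_square)
    finally show ?thesis unfolding vvA vvB .
  qed
  have vM: "variance (Mb \<beta>o) = (variance C - 2 * \<beta>o * cov C D + \<beta>o^2 * variance D)/real n"
  proof -
    have "variance (Mb \<beta>o) = cov (Mb \<beta>o) (Mb \<beta>o)" by (rule var_cov)
    also have "\<dots> = 1 * 1 * cov (sample_mean n Cs) (sample_mean n Cs) + 1 * (- \<beta>o) * cov (sample_mean n Cs) (sample_mean n Ds)
       + (- \<beta>o) * 1 * cov (sample_mean n Ds) (sample_mean n Cs) + (- \<beta>o) * (- \<beta>o) * cov (sample_mean n Ds) (sample_mean n Ds)"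
      unfolding ME by (rule cov_aff2[OF mC mD mC mD qC qD qC qD])
    also have "\<dots> = (cov C C - 2 * \<beta>o * cov C D + \<beta>o^2 * cov D D)/real n"
      unfolding cCC cCD cDC cDD cov_sym[of D C] using n0 by (simp add: field_simps power2_eq_square)
    finally show ?thesis unfolding vvC vvD .
  qed
  have cNM: "cov (N \<alpha>o) (Mb \<beta>o) = (cov A C - \<beta>o * cov A D - \<alpha>o * cov B C + \<alpha>o * \<beta>o * cov B D)/real n"
    unfolding NE ME cov_aff2[OF mA mB mC mD qA qB qC qD] cAC cAD cBC cBD
    using n0 by (simp add: field_simps)
  have eN: "expectation (N \<alpha>o) = expectation A"
    unfolding NE exp_aff2[OF int_L1[OF mA qA] int_L1[OF mB qB]] eA eB by simp
  have eM: "expectation (Mb \<beta>o) = expectation C"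
    unfolding ME exp_aff2[OF int_L1[OF mC qC] int_L1[OF mD qD]] eC eD by simp
  have vAb: "variance (sample_mean n As) = variance A / real n"
    using var_cov[of "sample_mean n As"] cAA vvA by simp
  have vCb: "variance (sample_mean n Cs) = variance C / real n"
    using var_cov[of "sample_mean n Cs"] cCC vvC by simp
  have vR: "variance (\<lambda>\<omega>. P * D \<omega> - Q * B \<omega>) = P^2 * variance D - 2 * P * Q * cov B D + Q^2 * variance B" for P Q
  proof -
    have e: "(\<lambda>\<omega>. P * D \<omega> - Q * B \<omega>) = (\<lambda>\<omega>. 0 + P * D \<omega> + (- Q) * B \<omega>)" by (simp add: fun_eq_iff)
    have "variance (\<lambda>\<omega>. P * D \<omega> - Q * B \<omega>) = cov (\<lambda>\<omega>. P * D \<omega> - Q * B \<omega>) (\<lambda>\<omega>. P * D \<omega> - Q * B \<omega>)"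
      by (rule var_cov)
    also have "\<dots> = P * P * cov D D + P * (- Q) * cov D B + (- Q) * P * cov B D + (- Q) * (- Q) * cov B B"
      unfolding e by (rule cov_aff2[OF rvD rvB rvD rvB sqD sqB sqD sqB])
    also have "\<dots> = P^2 * cov D D - 2 * P * Q * cov B D + Q^2 * cov B B"
      unfolding cov_sym[of D B] by (simp add: power2_eq_square algebra_simps)
    finally show ?thesis unfolding vvB vvD .
  qed
  have Dl: "variance B * variance D - (cov B D)^2 > 0"
  proof -
    have s: "0 < variance B * variance D" using varB varD by simp
    have "\<bar>cov B D\<bar> < sqrt (variance B * variance D)"
      using corrBD s by (simp add: corr_def abs_divide divide_less_eq)
    hence "sqrt ((cov B D)^2) < sqrt (variance B * variance D)" by simp
    thus ?thesis by (simp only: real_sqrt_less_iff)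
  qed
  have first: "Phi (N \<alpha>o) (Mb \<beta>o) - Phi (sample_mean n As) (sample_mean n Cs)
     = - (1 / (real n * (expectation C)^2))
             * (variance (\<lambda>\<omega>.
                   ((expectation A / expectation C) * cov B C - cov A B) * D \<omega>
                 - ((expectation A / expectation C) * cov C D - cov A D) * B \<omega>) / (variance B * variance D - (cov B D)^2))"
    unfolding Phi_def vN vM vAb vCb vR unfolding eN eM cNM eA eC cAC
    by (rule alg[where R="expectation A / expectation C"]) (use EA EC Dl n0 in \<open>auto simp: \<alpha>o_def \<beta>o_def\<close>)
  have "0 \<le> variance (\<lambda>\<omega>.
                   ((expectation A / expectation C) * cov B C - cov A B) * D \<omega>
                 - ((expectation A / expectation C) * cov C D - cov A D) * B \<omega>)"
    by (rule integral_nonneg_AE) simp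
  hence "0 \<le> (1 / (real n * (expectation C)^2))
             * (variance (\<lambda>\<omega>.
                   ((expectation A / expectation C) * cov B C - cov A B) * D \<omega>
                 - ((expectation A / expectation C) * cov C D - cov A D) * B \<omega>) / (variance B * variance D - (cov B D)^2))"
    using Dl n0 EC by (intro mult_nonneg_nonneg divide_nonneg_pos) auto
  with first show ?thesis by linarith
qed

end
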